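(* For each integer $n\ge 1$ let $\mathbb{P}_n^{*}$ be a probability distribution on $[n]=\{1,\ldots,n\}$, written as $\mathbb{P}_n^{*}(i)=\frac{1}{n}+\varepsilon_{i,n}$ for $i\in[n]$ (so $\varepsilon_{i,n}\in[-\tfrac1n,1-\tfrac1n]$ and $\sum_{i=1}^n\varepsilon_{i,n}=0$). Write $\alpha_n=n^{1/\log\log n}$. Assume there is a constant $C$ such that for all $n$ (with $\log\log n>0$) and all primes $p>\alpha_n$, $$\sum_{l=1}^{\lfloor n/p\rfloor}\varepsilon_{lp,n}\le \frac{C}{p}.$$ Then, as $n\to\infty$, $$\frac{1}{(\log\log n)^{1/2}}\sum_{\alpha_n<p\le n}\left(\frac1p+\sum_{l=1}^{\lfloor n/p\rfloor}\varepsilon_{lp,n}\right)\to 0,$$ where the outer sum is over primes $p$ with $\alpha_n<p\le n$.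
   Context: $\lfloor\cdot\rfloor$ is the floor function; $\log$ is the natural logarithm. *)

theory Defs
  imports "HOL-Analysis.Analysis" "HOL-Computational_Algebra.Primes"
begin

definition alpha :: "nat \<Rightarrow> real" where
  "alpha n = real n powr (1 / ln (ln (real n)))"

end

theory Submission
  imports Defs "HOL-Real_Asymp.Real_Asymp"
begin

lemma primes_prod_dvd:
  fixes N :: nat
  assumes "finite P" "\<And>p. p \<in> P \<Longrightarrow> prime p \<and> p dvd N"
  shows "\<Prod>P dvd N"
  using assms
proof (induction P rule: finite_induct)
  case empty then show ?case by simp
next
  case (insert p F)
  have pp: "prime p" "p dvd N" using insert.prems by auto
  have "\<not> p dvd \<Prod>F"
  proof
    assume "p dvd \<Prod>F"
    then obtain q where "q \<in> F" "p dvd q" using prime_dvd_prod_iff[OF insert.hyps(1) pp(1)] by auto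
    then have "p = q" using primes_dvd_imp_eq pp(1) insert.prems by blast
    with insert.hyps(2) \<open>q \<in> F\<close> show False by simp
  qed
  then have "coprime p (\<Prod>F)" using pp(1) prime_imp_coprime by blast
  moreover have "\<Prod>F dvd N" using insert by auto
  ultimately show ?case using insert.hyps pp divides_mult by simp
qed

lemma block_card:
  fixes m :: nat
  assumes "m \<ge> 2"
  shows "real (card {p. prime p \<and> m < p \<and> p \<le> 2*m}) * ln m \<le> real m * ln 4"
proof -
  define P where "P = {p. prime p \<and> m < p \<and> p \<le> 2*m}"
  have fin: "finite P" unfolding P_def by (rule finite_subset[of _ "{..2*m}"]) auto
  have dv: "p dvd (2*m choose m)" if "p \<in> P" for p
  proof -
    have pp: "prime p" "m < p" "p \<le> 2*m" using that P_def by auto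
    have "p dvd fact (2*m)" using pp dvd_fact[of p "2*m"] prime_ge_1_nat by blast
    also have "fact (2*m) = fact m * fact m * (2*m choose m)"
      using binomial_fact_lemma[of m "2*m"] by simp
    finally have "p dvd fact m * fact m * (2*m choose m)" .
    moreover have "\<not> p dvd (fact m :: nat)" using prime_dvd_fact_iff[OF pp(1)] pp(2) by simp
    ultimately show ?thesis using prime_dvd_mult_iff[OF pp(1)] by blast
  qed
  have "\<Prod>P dvd (2*m choose m)" using primes_prod_dvd[OF fin] dv P_def by blast
  then have "\<Prod>P \<le> (2*m choose m)" by (rule dvd_imp_le) (simp)
  also have "\<dots> \<le> 2^(2*m)" by (rule binomial_le_pow2)
  finally have A: "\<Prod>P \<le> 4^m" by (simp add: power_mult)
  have "m ^ card P = (\<Prod>p\<in>P. m)" by simp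
  also have "\<dots> \<le> \<Prod>P" by (rule prod_mono) (auto simp: P_def)
  finally have "m ^ card P \<le> 4^m" using A by linarith
  then have "real m ^ card P \<le> 4 ^ m" by (metis of_nat_le_iff of_nat_numeral of_nat_power)
  then have "ln (real m ^ card P) \<le> ln (4 ^ m)" using assms by (subst ln_le_cancel_iff) auto
  then show ?thesis unfolding P_def[symmetric] using assms by (simp add: ln_realpow)
qed

lemma block_sum:
  fixes m :: nat
  assumes "m \<ge> 2"
  shows "(\<Sum>p\<in>{p. prime p \<and> m < p \<and> p \<le> 2*m}. 1 / real p) \<le> 2 * ln 2 / ln m"
proof -
  define P where "P = {p. prime p \<and> m < p \<and> p \<le> 2*m}"
  have lnm: "ln (real m) > 0" using assms by simp
  have "(\<Sum>p\<in>P. 1 / real p) \<le> (\<Sum>p\<in>P. 1 / real m)"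
    by (rule sum_mono) (use assms in \<open>auto simp: P_def intro!: divide_left_mono\<close>)
  also have "\<dots> = real (card P) / real m" by simp
  also have "\<dots> \<le> 2 * ln 2 / ln m"
  proof -
    have "real (card P) * ln m \<le> real m * ln 4" using block_card[OF assms] P_def by simp
    also have "ln (4::real) = 2 * ln 2" using ln_realpow[of 2 2] by simp
    finally show ?thesis using lnm assms by (simp add: field_simps)
  qed
  finally show ?thesis by (simp add: P_def)
qed

lemma dyadic_sum:
  fixes a b :: nat
  assumes "1 \<le> a" "a \<le> b"
  shows "(\<Sum>p\<in>{p. prime p \<and> 2^a < p \<and> p \<le> 2^b}. 1 / real p) \<le> (\<Sum>j\<in>{a..<b}. 2 / real j)"
  using assms(2)
proof (induction b rule: dec_induct)
  case base
  have e: "{p. prime p \<and> 2^a < p \<and> p \<le> (2::nat)^a} = {}" by auto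
  show ?case unfolding e by simp
next
  case (step b)
  have split: "{p. prime p \<and> 2^a < p \<and> p \<le> (2::nat)^Suc b} =
     {p. prime p \<and> 2^a < p \<and> p \<le> 2^b} \<union> {p. prime p \<and> 2^b < p \<and> p \<le> 2*2^b}"
  proof -
    have ab: "(2::nat)^a \<le> 2^b" using step.hyps by (simp add: power_increasing)
    show ?thesis by (auto intro: le_less_trans[OF ab])
  qed
  have fin1: "finite {p. prime p \<and> 2^a < p \<and> p \<le> (2::nat)^b}" by (rule finite_subset[of _ "{..2^b}"]) auto
  have fin2: "finite {p. prime p \<and> 2^b < p \<and> p \<le> 2*(2::nat)^b}" by (rule finite_subset[of _ "{..2*2^b}"]) auto
  have "(\<Sum>p\<in>{p. prime p \<and> 2^a < p \<and> p \<le> 2^Suc b}. 1 / real p) =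
     (\<Sum>p\<in>{p. prime p \<and> 2^a < p \<and> p \<le> 2^b}. 1 / real p) + (\<Sum>p\<in>{p. prime p \<and> 2^b < p \<and> p \<le> 2*2^b}. 1 / real p)"
    unfolding split by (rule sum.union_disjoint[OF fin1 fin2]) auto
  also have "\<dots> \<le> (\<Sum>j\<in>{a..<b}. 2 / real j) + 2 * ln 2 / ln (real (2^b::nat))"
  proof (rule add_mono[OF step.IH])
    have "(2::nat) \<le> 2^b" using step.hyps assms(1) by (metis le_trans one_le_numeral power_increasing power_one_right)
    then show "(\<Sum>p\<in>{p. prime p \<and> 2^b < p \<and> p \<le> 2*2^b}. 1 / real p) \<le> 2 * ln 2 / ln (real (2^b::nat))"
      using block_sum[of "2^b"] by simp
  qed
  also have "2 * ln 2 / ln (real (2^b::nat)) = 2 / real b"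
    using step.hyps assms(1) by (simp add: ln_realpow)
  also have "(\<Sum>j\<in>{a..<b}. 2 / real j) + 2 / real b = (\<Sum>j\<in>{a..<Suc b}. 2 / real j)"
    using step.hyps by simp
  finally show ?case .
qed

lemma harm_bound:
  fixes a b :: nat
  assumes "1 \<le> a" "a < b"
  shows "(\<Sum>j\<in>{a..<b}. 1 / real j) \<le> 1 / real a + ln (real (b - 1) / real a)"
  using Suc_leI[OF assms(2)]
proof (induction b rule: dec_induct)
  case base
  then show ?case using assms by simp
next
  case (step b)
  have b1: "b \<ge> 2" "real b - 1 > 0" using step.hyps assms by auto
  have "ln ((real b - 1) / real b) \<le> (real b - 1) / real b - 1"
    by (rule ln_le_minus_one) (use b1 in simp)
  also have "\<dots> = - 1 / real b" using b1 by (simp add: field_simps)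
  finally have l: "1 / real b \<le> ln (real b) - ln (real b - 1)"
    using b1 by (simp add: ln_div)
  have "(\<Sum>j\<in>{a..<Suc b}. 1 / real j) = (\<Sum>j\<in>{a..<b}. 1 / real j) + 1 / real b"
    using step.hyps by simp
  also have "\<dots> \<le> 1 / real a + ln (real (b - 1) / real a) + (ln (real b) - ln (real b - 1))"
    using step.IH l by linarith
  also have "\<dots> = 1 / real a + ln (real (Suc b - 1) / real a)"
    using b1 assms by (simp add: ln_div of_nat_diff)
  finally show ?case .
qed


lemma S_bound:
  fixes n :: nat
  assumes L: "ln (ln (real n)) > 0" and a1: "log 2 (alpha n) > 1" and an: "alpha n < real n"
  shows "(\<Sum>p\<in>{p. prime p \<and> alpha n < real p \<and> p \<le> n}. 1 / real p)
     \<le> 2 + 2 * ln (log 2 (real n) / (log 2 (alpha n) - 1))"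
proof -
  define al where "al = alpha n"
  have npos: "real n > 0" using L by (cases "n = 0") auto
  have alpos: "al > 0" using npos unfolding al_def alpha_def by simp
  define a where "a = nat \<lfloor>log 2 al\<rfloor>"
  define b where "b = nat \<lceil>log 2 (real n)\<rceil>"
  have ra: "real a = of_int \<lfloor>log 2 al\<rfloor>" using a1 al_def a_def by simp
  have rb: "real b = of_int \<lceil>log 2 (real n)\<rceil>"
  proof -
    have "log 2 (alpha n) < log 2 (real n)" using an alpos al_def by simp
    then have "log 2 (real n) > 1" using a1 by linarith
    then show ?thesis using b_def by simp
  qed
  have a_ge: "real a > log 2 al - 1" "real a \<le> log 2 al" using ra by linarith+
  have b_le: "real b < log 2 (real n) + 1" "real b \<ge> log 2 (real n)" using rb by linarith+
  have "log 2 al < log 2 (real n)" using an alpos al_def by simp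
  then have ab: "a < b" using a_ge b_le by linarith
  have "real a > 0" using a_ge a1[folded al_def] by linarith
  then have a1': "1 \<le> a" by simp
  have "real (2^a::nat) = 2 powr real a" by (simp add: powr_realpow)
  also have "\<dots> \<le> 2 powr log 2 al" using a_ge by simp
  also have "\<dots> = al" using alpos by simp
  finally have A: "real (2^a::nat) \<le> al" .
  have "real n = 2 powr log 2 (real n)" using npos by simp
  also have "\<dots> \<le> 2 powr real b" using b_le by simp
  also have "\<dots> = real (2^b::nat)" by (simp add: powr_realpow)
  finally have B: "real n \<le> real (2^b::nat)" .
  have sub: "{p. prime p \<and> alpha n < real p \<and> p \<le> n} \<subseteq> {p. prime p \<and> 2^a < p \<and> p \<le> 2^b}"
  proof
    fix p assume "p \<in> {p. prime p \<and> alpha n < real p \<and> p \<le> n}"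
    then have "prime p" "al < real p" "p \<le> n" using al_def by auto
    moreover have "2^a < p"
    proof -
      have "real (2^a::nat) < real p" using A \<open>al < real p\<close> by linarith
      then show ?thesis by (simp only: of_nat_less_iff)
    qed
    moreover have "p \<le> 2^b"
    proof -
      have "real p \<le> real (2^b::nat)" using B \<open>p \<le> n\<close> by (meson le_trans of_nat_le_iff)
      then show ?thesis by (simp only: of_nat_le_iff)
    qed
    ultimately show "p \<in> {p. prime p \<and> 2^a < p \<and> p \<le> 2^b}" by simp
  qed
  have finQ: "finite {p. prime p \<and> 2^a < p \<and> p \<le> (2::nat)^b}" by (rule finite_subset[of _ "{..2^b}"]) auto
  have "(\<Sum>p\<in>{p. prime p \<and> alpha n < real p \<and> p \<le> n}. 1 / real p)
      \<le> (\<Sum>p\<in>{p. prime p \<and> 2^a < p \<and> p \<le> 2^b}. 1 / real p)"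
    by (rule sum_mono2[OF finQ sub]) auto
  also have "\<dots> \<le> (\<Sum>j\<in>{a..<b}. 2 / real j)" using dyadic_sum a1' ab by simp
  also have "\<dots> = 2 * (\<Sum>j\<in>{a..<b}. 1 / real j)" by (simp add: sum_distrib_left)
  also have "\<dots> \<le> 2 * (1 / real a + ln (real (b - 1) / real a))"
    using harm_bound[OF a1' ab] by simp
  also have "\<dots> \<le> 2 * (1 + ln (log 2 (real n) / (log 2 al - 1)))"
  proof -
    have "1 / real a \<le> 1" using a1' by simp
    moreover have "ln (real (b - 1) / real a) \<le> ln (log 2 (real n) / (log 2 al - 1))"
    proof (subst ln_le_cancel_iff)
      have b1: "real (b - 1) = real b - 1" "real b - 1 \<ge> 1" using ab a1' by (auto simp: of_nat_diff)
      show "0 < real (b - 1) / real a" using b1 a1' by simp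
      show "0 < log 2 (real n) / (log 2 al - 1)" using a1 al_def b_le b1 by auto
      show "real (b - 1) / real a \<le> log 2 (real n) / (log 2 al - 1)"
        using b1 a_ge b_le a1 al_def by (intro frac_le) auto
    qed
    ultimately show ?thesis by simp
  qed
  finally show ?thesis using al_def by simp
qed

theorem lemma3:
  fixes eps :: "nat \<Rightarrow> nat \<Rightarrow> real"
  assumes nonneg: "\<And>n i. n \<ge> 1 \<Longrightarrow> i \<in> {1..n} \<Longrightarrow> 1 / real n + eps i n \<ge> 0"
    and total: "\<And>n. n \<ge> 1 \<Longrightarrow> (\<Sum>i=1..n. 1 / real n + eps i n) = 1"
    and bound: "\<exists>C::real. \<forall>n p. n \<ge> 1 \<longrightarrow> ln (ln (real n)) > 0 \<longrightarrow> prime p \<longrightarrow> real p > alpha n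
                  \<longrightarrow> (\<Sum>l=1..n div p. eps (l * p) n) \<le> C / real p"
  shows "(\<lambda>n. (1 / sqrt (ln (ln (real n)))) *
            (\<Sum>p\<in>{p. prime p \<and> alpha n < real p \<and> p \<le> n}.
               1 / real p + (\<Sum>l=1..n div p. eps (l * p) n))) \<longlonglongrightarrow> 0"
proof -
  obtain C where C: "\<And>n p. n \<ge> 1 \<Longrightarrow> ln (ln (real n)) > 0 \<Longrightarrow> prime p \<Longrightarrow> real p > alpha n
                  \<Longrightarrow> (\<Sum>l=1..n div p. eps (l * p) n) \<le> C / real p" using bound by blast
  define K where "K = \<bar>1 + C\<bar>"
  define g where "g = (\<lambda>n::nat. (2 + 2 * ln (log 2 (real n) / (log 2 (alpha n) - 1))) / sqrt (ln (ln (real n))))"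
  have glim: "g \<longlonglongrightarrow> 0" unfolding g_def alpha_def by real_asymp
  have ev1: "eventually (\<lambda>n. ln (ln (real n)) > 0) sequentially" by real_asymp
  have ev2: "eventually (\<lambda>n. log 2 (alpha n) > 1) sequentially" unfolding alpha_def by real_asymp
  have ev3: "eventually (\<lambda>n. alpha n < real n) sequentially" unfolding alpha_def by real_asymp
  show ?thesis
  proof (rule Lim_null_comparison)
    show "(\<lambda>n. K * g n) \<longlonglongrightarrow> 0" using tendsto_mult_right_zero[OF glim] by simp
    show "\<forall>\<^sub>F n in sequentially. norm ((1 / sqrt (ln (ln (real n)))) *
            (\<Sum>p\<in>{p. prime p \<and> alpha n < real p \<and> p \<le> n}.
               1 / real p + (\<Sum>l=1..n div p. eps (l * p) n))) \<le> K * g n"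
      using ev1 ev2 ev3
    proof eventually_elim
      case (elim n)
      define P where "P = {p. prime p \<and> alpha n < real p \<and> p \<le> n}"
      have n1: "n \<ge> 1" using elim(1) by (cases n) auto
      have tl: "0 \<le> 1 / real p + (\<Sum>l=1..n div p. eps (l * p) n)" if "p \<in> P" for p
      proof -
        have pp: "prime p" "p \<le> n" using that P_def by auto
        have p0: "p > 0" using pp prime_gt_0_nat by blast
        have "(\<Sum>l=1..n div p. - (1 / real n)) \<le> (\<Sum>l=1..n div p. eps (l * p) n)"
        proof (rule sum_mono)
          fix l assume "l \<in> {1..n div p}"
          then have "l * p \<in> {1..n}" using p0 by (auto simp: less_eq_div_iff_mult_less_eq)
          then have "0 \<le> 1 / real n + eps (l * p) n" by (rule nonneg[OF n1])
          then show "- (1 / real n) \<le> eps (l * p) n" by linarith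
        qed
        moreover have "real (n div p) / real n \<le> 1 / real p"
        proof -
          have "n div p * p \<le> n" by (rule div_times_less_eq_dividend)
          then have "real (n div p) * real p \<le> real n"
            by (simp only: of_nat_mult[symmetric] of_nat_le_iff)
          then show ?thesis using p0 n1 by (simp add: field_simps)
        qed
        ultimately show ?thesis by simp
      qed
      have tu: "1 / real p + (\<Sum>l=1..n div p. eps (l * p) n) \<le> K * (1 / real p)" if "p \<in> P" for p
      proof -
        have pp: "prime p" "alpha n < real p" using that P_def by auto
        have "1 / real p + (\<Sum>l=1..n div p. eps (l * p) n) \<le> 1 / real p + C / real p"
          using C[OF n1 elim(1) pp] by simp
        also have "\<dots> = (1 + C) * (1 / real p)" by (simp add: add_divide_distrib)
        also have "\<dots> \<le> K * (1 / real p)" unfolding K_def by (intro mult_right_mono) auto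
        finally show ?thesis .
      qed
      define T where "T = (\<Sum>p\<in>P. 1 / real p + (\<Sum>l=1..n div p. eps (l * p) n))"
      have T0: "T \<ge> 0" unfolding T_def using tl by (intro sum_nonneg) auto
      have "T \<le> (\<Sum>p\<in>P. K * (1 / real p))" unfolding T_def using tu by (intro sum_mono) auto
      also have "\<dots> = K * (\<Sum>p\<in>P. 1 / real p)" by (simp add: sum_distrib_left)
      also have "\<dots> \<le> K * (2 + 2 * ln (log 2 (real n) / (log 2 (alpha n) - 1)))"
        unfolding P_def using S_bound[OF elim] K_def by (intro mult_left_mono) auto
      finally have TK: "T \<le> K * (2 + 2 * ln (log 2 (real n) / (log 2 (alpha n) - 1)))" .
      have sq: "sqrt (ln (ln (real n))) > 0" using elim(1) by simp
      have "norm ((1 / sqrt (ln (ln (real n)))) * T) = T / sqrt (ln (ln (real n)))"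
        using T0 sq by simp
      also have "\<dots> \<le> K * (2 + 2 * ln (log 2 (real n) / (log 2 (alpha n) - 1))) / sqrt (ln (ln (real n)))"
        using TK sq by (intro divide_right_mono) auto
      also have "\<dots> = K * g n" unfolding g_def by simp
      finally show ?case unfolding T_def P_def .
    qed
  qed
qed

end
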